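(* Let $N\ge 1$ be an odd integer and $q,p$ odd, relatively prime integers, and let $H(N,q,p)=\{(R(q\theta),R(p\theta+2\pi i/N)):\theta\in\mathbb{R},\ i\in\{0,\dots,N-1\}\}$. Then there exists $\phi\in L^2(\mathcal P,\lambda,\mathbb{R})$ whose stabilizer $\{k\in\mathrm{SO}(2)\times\mathrm{SO}(2): T'(k)\phi=\phi \text{ in } L^2\}$ equals $H(N,q,p)$. In particular, every infinite potential little group $H(N,q,p)$ (with $N$ odd and $q,p$ odd and relatively prime) is an actual little group of the ultrahyperbolic BMS group.
   Context: $R(\theta)=\begin{pmatrix}\cos\theta & \sin\theta\\ -\sin\theta & \cos\theta\end{pmatrix}$. $\mathcal P=P_1(\mathbb{R})\times P_1(\mathbb{R})$ with $P_1(\mathbb{R})=\mathbb{R}\cup\{\infty\}$; angular coordinates $x=\cot(\rho/2)$, $y=\cot(\sigma/2)$; $\lambda$ is the $\mathrm{SO}(2)\times\mathrm{SO}(2)$-invariant measure $d\rho\,d\sigma$; $L^2(\mathcal P,\lambda,\mathbb{R})$ is the real Hilbert space of square-integrable real functions on $\mathcal P$. For $g=\begin{pmatrix}a&b\\c&d\end{pmatrix}\in\mathrm{SL}(2,\mathbb{R})$: $xg=\frac{xa+c}{xb+d}$, $k_g(x)=\left(\frac{(xb+d)^2+(xa+c)^2}{1+x^2}\right)^{1/2}$, $s_g(x)=\frac{xb+d}{|xb+d|}$, and $(T'(g,h)\phi)(x,y)=k_g^{-3}(x)s_g(x)k_h^{-3}(y)s_h(y)\phi(xg,yh)$. The ultrahyperbolic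 BMS group is the semidirect product $L^2(\mathcal P,\lambda,\mathbb{R})\rtimes(\mathrm{SL}(2,\mathbb{R})\times\mathrm{SL}(2,\mathbb{R}))$ with dual action $T'$; a little group is the stabilizer of some $\phi$ under $T'$. *)

theory Defs
  imports "HOL-Analysis.Analysis"
begin

text \<open>The projective line P_1(R) = R \<union> {\<infinity>}, with None playing the role of \<infinity>.\<close>
type_synonym P1 = "real option"

text \<open>2x2 real matrices g = (a b; c d), with a = g$1$1, b = g$1$2, c = g$2$1, d = g$2$2.\<close>
definition rotM :: "real \<Rightarrow> real^2^2" where
  "rotM \<theta> = vector [vector [cos \<theta>, sin \<theta>], vector [- sin \<theta>, cos \<theta>]]"

definition SO2 :: "(real^2^2) set" where
  "SO2 = range rotM"

definition SL2 :: "(real^2^2) set" where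
  "SL2 = {g. det g = 1}"

definition P1act :: "P1 \<Rightarrow> real^2^2 \<Rightarrow> P1" where
  "P1act x g = (let a = g$1$1; b = g$1$2; c = g$2$1; d = g$2$2 in
     (case x of
        None \<Rightarrow> (if b = 0 then None else Some (a / b))
      | Some t \<Rightarrow> (if t * b + d = 0 then None else Some ((t * a + c) / (t * b + d)))))"

definition kfac :: "real^2^2 \<Rightarrow> P1 \<Rightarrow> real" where
  "kfac g x = (let a = g$1$1; b = g$1$2; c = g$2$1; d = g$2$2 in
     (case x of
        None \<Rightarrow> sqrt (b\<^sup>2 + a\<^sup>2)
      | Some t \<Rightarrow> sqrt (((t * b + d)\<^sup>2 + (t * a + c)\<^sup>2) / (1 + t\<^sup>2))))"

text \<open>s_g(x) = (x b + d)/|x b + d|; its values on the null set where it is undefined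
  (x = \<infinity>, or x b + d = 0) are fixed by convention.\<close>
definition sfac :: "real^2^2 \<Rightarrow> P1 \<Rightarrow> real" where
  "sfac g x = (let b = g$1$2; d = g$2$2 in
     (case x of None \<Rightarrow> sgn b | Some t \<Rightarrow> sgn (t * b + d)))"

definition Tdual :: "(real^2^2) \<times> (real^2^2) \<Rightarrow> (P1 \<times> P1 \<Rightarrow> real) \<Rightarrow> (P1 \<times> P1 \<Rightarrow> real)" where
  "Tdual k \<phi> = (\<lambda>(x, y).
     inverse (kfac (fst k) x ^ 3) * sfac (fst k) x *
     inverse (kfac (snd k) y ^ 3) * sfac (snd k) y *
     \<phi> (P1act x (fst k), P1act y (snd k)))"

definition P1space :: "P1 measure" where
  "P1space = sigma UNIV {A. Some -` A \<in> sets borel}"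

text \<open>Angular coordinate \<rho> \<in> [0, 2\<pi>) with x = cot(\<rho>/2); \<rho> = 0 gives \<infinity>.\<close>
definition angpt :: "real \<Rightarrow> P1" where
  "angpt \<rho> = (if sin (\<rho> / 2) = 0 then None else Some (cot (\<rho> / 2)))"

text \<open>The SO(2)-invariant measure d\<rho> on P_1(R).\<close>
definition lamP1 :: "P1 measure" where
  "lamP1 = distr (restrict_space lborel {0..<2*pi}) P1space angpt"

definition lamP :: "(P1 \<times> P1) measure" where
  "lamP = lamP1 \<Otimes>\<^sub>M lamP1"

definition L2P :: "(P1 \<times> P1 \<Rightarrow> real) set" where
  "L2P = {\<phi>. \<phi> \<in> borel_measurable lamP \<and> integrable lamP (\<lambda>z. (\<phi> z)\<^sup>2)}"

definition stabSO :: "(P1 \<times> P1 \<Rightarrow> real) \<Rightarrow> ((real^2^2) \<times> (real^2^2)) set" where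
  "stabSO \<phi> = {k \<in> SO2 \<times> SO2. AE z in lamP. Tdual k \<phi> z = \<phi> z}"

definition Hgrp :: "nat \<Rightarrow> int \<Rightarrow> int \<Rightarrow> ((real^2^2) \<times> (real^2^2)) set" where
  "Hgrp N q p = {(rotM (of_int q * \<theta>), rotM (of_int p * \<theta> + 2 * pi * real i / real N)) | \<theta> i.
                  i \<in> {0..<N}}"

end

theory Submission
  imports Defs
begin

definition U :: "P1 \<Rightarrow> real" where
  "U x = (case x of None \<Rightarrow> 0 | Some t \<Rightarrow> pi/2 - arctan t)"

lemma U_Some_bounds: "0 < U (Some t)" "U (Some t) < pi"
  using arctan_bounded[of t] by (auto simp: U_def)

lemma cot_U: "cot (U (Some t)) = t"
proof -
  have "cot (U (Some t)) = tan (pi/2 - U (Some t))" by (simp add: tan_cot')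
  also have "\<dots> = t" by (simp add: U_def tan_arctan)
  finally show ?thesis .
qed

lemma U_cot: assumes "0 < w" "w < pi" shows "U (Some (cot w)) = w"
proof -
  have "arctan (cot w) = arctan (tan (pi/2 - w))" by (simp add: tan_cot')
  also have "\<dots> = pi/2 - w" using assms by (intro arctan_tan) auto
  finally show ?thesis by (simp add: U_def)
qed

lemma sin_minus_int_pi: "sin (w - of_int n * pi) = (if even n then sin w else - sin w)"
  by (simp add: sin_diff mult.commute[of _ pi])

lemma cos_minus_int_pi: "cos (w - of_int n * pi) = (if even n then cos w else - cos w)"
  by (simp add: cos_diff mult.commute[of _ pi])

lemma U_cot_general:
  assumes "sin w \<noteq> 0"
  shows "\<exists>n::int. U (Some (cot w)) = w - of_int n * pi \<and> sgn (sin w) = (if even n then 1 else -1)"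
proof -
  define n where "n = \<lfloor>w / pi\<rfloor>"
  define w' where "w' = w - of_int n * pi"
  have "of_int n \<le> w / pi" "w / pi < of_int n + 1" unfolding n_def by linarith+
  then have "of_int n * pi \<le> w" "w < (of_int n + 1) * pi"
    using pi_gt_zero by (simp_all add: field_simps)
  then have w'1: "0 \<le> w'" and w'2: "w' < pi" unfolding w'_def by (auto simp: algebra_simps)
  have sw': "sin w' = (if even n then sin w else - sin w)" unfolding w'_def by (rule sin_minus_int_pi)
  have cw': "cos w' = (if even n then cos w else - cos w)" unfolding w'_def by (rule cos_minus_int_pi)
  have "w' \<noteq> 0" using sw' assms by (auto split: if_splits)
  with w'1 have w'0: "0 < w'" by auto
  have cot: "cot w' = cot w" using sw' cw' by (simp add: cot_def)
  have "U (Some (cot w)) = w'" using U_cot[OF w'0 w'2] cot by simp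
  moreover have "sin w' > 0" using w'0 w'2 by (rule sin_gt_zero)
  then have "sgn (sin w) = (if even n then 1 else -1)" using sw' by (auto split: if_splits)
  ultimately show ?thesis unfolding w'_def by blast
qed

lemma rot_entries: "rotM a $1$1 = cos a" "rotM a $1$2 = sin a" "rotM a $2$1 = - sin a" "rotM a $2$2 = cos a"
  by (simp_all add: rotM_def)

lemma rot_act:
  assumes "0 < u" "u < pi"
  shows "P1act (Some (cot u)) (rotM a) = (if sin (u + a) = 0 then None else Some (cot (u + a)))"
    "kfac (rotM a) (Some (cot u)) = 1"
    "sfac (rotM a) (Some (cot u)) = sgn (sin (u + a))"
proof -
  have su: "sin u > 0" using assms by (rule sin_gt_zero)
  have e1: "cot u * sin a + cos a = sin (u + a) / sin u"
    using su by (simp add: cot_def sin_add field_simps)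
  have e2: "cot u * cos a - sin a = cos (u + a) / sin u"
    using su by (simp add: cot_def cos_add field_simps)
  show "P1act (Some (cot u)) (rotM a) = (if sin (u + a) = 0 then None else Some (cot (u + a)))"
  proof -
    have g: "P1act (Some t) (rotM a) = (if t * sin a + cos a = 0 then None else Some ((t * cos a - sin a) / (t * sin a + cos a)))" for t
      by (simp add: P1act_def rot_entries Let_def)
    have "sin (u + a) \<noteq> 0 \<Longrightarrow> (cos (u + a) / sin u) / (sin (u + a) / sin u) = cot (u + a)"
      using su by (simp add: cot_def)
    then show ?thesis using su unfolding g e1 e2 by simp
  qed
  have "(sin (u + a) / sin u)\<^sup>2 + (cos (u + a) / sin u)\<^sup>2 = 1 + (cot u)\<^sup>2"
    using su by (simp add: cot_def field_simps power2_eq_square sin_squared_eq)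
  moreover have "1 + (cot u)\<^sup>2 \<noteq> 0" by (metis add_pos_nonneg zero_le_power2 zero_less_one less_irrefl)
  ultimately show "kfac (rotM a) (Some (cot u)) = 1"
    by (simp add: kfac_def rot_entries Let_def e1 e2)
  show "sfac (rotM a) (Some (cot u)) = sgn (sin (u + a))"
    using su by (simp add: sfac_def rot_entries Let_def e1 sgn_divide)
qed

definition phi :: "int \<Rightarrow> int \<Rightarrow> int \<Rightarrow> P1 \<times> P1 \<Rightarrow> real" where
  "phi M p q = (\<lambda>(x, y). cos (of_int M * (of_int p * U x - of_int q * U y)))"

lemma cos_shift_parity:
  "cos (X - of_int j * pi) = (if even j then cos X else - cos X)"
  by (rule cos_minus_int_pi)

lemma Tdual_phi:
  assumes oddp: "odd (M * p)" and oddq: "odd (M * q)"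
    and s1: "sin (U (Some t) + a) \<noteq> 0" and s2: "sin (U (Some s) + b) \<noteq> 0"
  shows "Tdual (rotM a, rotM b) (phi M p q) (Some t, Some s)
      = cos (of_int M * (of_int p * (U (Some t) + a) - of_int q * (U (Some s) + b)))"
proof -
  define u where "u = U (Some t)"
  define v where "v = U (Some s)"
  have t: "t = cot u" and s: "s = cot v" unfolding u_def v_def by (simp_all add: cot_U)
  have u: "0 < u" "u < pi" and v: "0 < v" "v < pi" unfolding u_def v_def by (simp_all add: U_Some_bounds)
  obtain n1 :: int where n1: "U (Some (cot (u + a))) = u + a - of_int n1 * pi"
      "sgn (sin (u + a)) = (if even n1 then 1 else -1)"
    using U_cot_general s1 unfolding u_def by blast
  obtain n2 :: int where n2: "U (Some (cot (v + b))) = v + b - of_int n2 * pi"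
      "sgn (sin (v + b)) = (if even n2 then 1 else -1)"
    using U_cot_general s2 unfolding v_def by blast
  define X where "X = of_int M * (of_int p * (u + a) - of_int q * (v + b))"
  have e: "of_int M * (of_int p * (u + a - of_int n1 * pi) - of_int q * (v + b - of_int n2 * pi))
      = X - of_int (M * p * n1 - M * q * n2) * pi"
    unfolding X_def by (simp add: algebra_simps)
  have par: "even (M * p * n1 - M * q * n2) = even (n1 + n2)" using oddp oddq by auto
  have "Tdual (rotM a, rotM b) (phi M p q) (Some t, Some s)
      = sgn (sin (u + a)) * sgn (sin (v + b)) *
        cos (of_int M * (of_int p * (u + a - of_int n1 * pi) - of_int q * (v + b - of_int n2 * pi)))"
    unfolding t s Tdual_def phi_def using rot_act[OF u] rot_act[OF v] s1 s2 n1 n2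
    unfolding u_def[symmetric] v_def[symmetric] by simp
  also have "\<dots> = cos X" unfolding e cos_shift_parity n1 n2 par by auto
  finally show ?thesis unfolding X_def u_def v_def .
qed

lemma angpt_0: "angpt 0 = None" by (simp add: angpt_def)

lemma angpt_in:
  assumes "0 < r" "r < 2 * pi"
  shows "angpt r = Some (cot (r / 2))" "U (angpt r) = r / 2"
proof -
  have "sin (r / 2) > 0" using assms by (intro sin_gt_zero) auto
  then show "angpt r = Some (cot (r / 2))" by (simp add: angpt_def)
  then show "U (angpt r) = r / 2" using assms by (simp add: U_cot)
qed

lemma sets_P1space_I: "Some -` A \<in> sets borel \<Longrightarrow> A \<in> sets P1space"
  unfolding P1space_def by (simp add: sigma_sets.Basic)

lemma space_P1space[simp]: "space P1space = UNIV"
  unfolding P1space_def by (simp add: space_measure_of_conv)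

lemma angpt_measurable: "angpt \<in> measurable lborel P1space"
  unfolding P1space_def
proof (rule measurable_measure_of)
  fix A :: "P1 set" assume "A \<in> {A. Some -` A \<in> sets borel}"
  then have B: "Some -` A \<in> sets borel" by simp
  have c: "(\<lambda>r::real. cot (r / 2)) \<in> borel_measurable borel" unfolding cot_def by measurable
  have s: "(\<lambda>r::real. sin (r / 2)) \<in> borel_measurable borel" by measurable
  have "angpt -` A \<inter> space lborel =
      ((\<lambda>r. sin (r / 2)) -` {0} \<inter> {r. None \<in> A}) \<union> ((\<lambda>r. sin (r / 2)) -` (- {0}) \<inter> (\<lambda>r. cot (r / 2)) -` (Some -` A))"
    by (auto simp: angpt_def split: if_splits)
  also have "\<dots> \<in> sets lborel"
  proof -
    have 1: "(\<lambda>r::real. sin (r / 2)) -` {0} \<in> sets borel" using measurable_sets[OF s, of "{0}"] by simp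
    have 2: "(\<lambda>r::real. sin (r / 2)) -` (- {0}) \<in> sets borel" using measurable_sets[OF s, of "- {0}"] by simp
    have 3: "(\<lambda>r::real. cot (r / 2)) -` (Some -` A) \<in> sets borel" using measurable_sets[OF c B] by simp
    have 4: "{r::real. None \<in> A} \<in> sets borel" by (cases "None \<in> A") auto
    show ?thesis using 1 2 3 4 by auto
  qed
  finally show "angpt -` A \<inter> space lborel \<in> sets lborel" .
qed auto

definition RR :: "real measure" where "RR = restrict_space lborel {0..<2*pi}"

lemma lamP1_RR: "lamP1 = distr RR P1space angpt"
  by (simp add: lamP1_def RR_def)

lemma angpt_meas_RR: "angpt \<in> measurable RR P1space"
  unfolding RR_def by (rule measurable_restrict_space1[OF angpt_measurable])

lemma fin_RR: "finite_measure RR"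
  unfolding RR_def by (rule finite_measureI) (simp add: emeasure_restrict_space)

lemma fin_lamP1: "finite_measure lamP1"
  unfolding lamP1_RR by (rule finite_measure.finite_measure_distr[OF fin_RR angpt_meas_RR])

lemma sets_lamP1[measurable_cong]: "sets lamP1 = sets P1space"
  by (simp add: lamP1_RR)

lemma space_lamP1[simp]: "space lamP1 = UNIV"
  by (simp add: lamP1_RR)

lemma emeasure_lamP1:
  assumes "A \<in> sets P1space"
  shows "emeasure lamP1 A = emeasure lborel (angpt -` A \<inter> {0..<2*pi})"
proof -
  have "emeasure lamP1 A = emeasure RR (angpt -` A \<inter> space RR)"
    unfolding lamP1_RR by (rule emeasure_distr[OF angpt_meas_RR assms])
  also have "\<dots> = emeasure lborel (angpt -` A \<inter> {0..<2*pi})"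
    unfolding RR_def by (subst emeasure_restrict_space) auto
  finally show ?thesis .
qed

lemma space_lamP[simp]: "space lamP = UNIV"
  by (simp add: lamP_def space_pair_measure)

lemma U_measurable: "U \<in> borel_measurable P1space"
proof (rule measurableI)
  fix A :: "real set" assume A: "A \<in> sets borel"
  have f: "(\<lambda>t. pi/2 - arctan t) \<in> borel_measurable borel" by measurable
  have "Some -` (U -` A) = (\<lambda>t. pi/2 - arctan t) -` A \<inter> space borel" by (auto simp: U_def)
  also have "\<dots> \<in> sets borel" using measurable_sets[OF f A] .
  finally show "U -` A \<inter> space P1space \<in> sets P1space" by (simp add: sets_P1space_I)
qed auto

lemma phi_measurable: "phi M p q \<in> borel_measurable lamP"
proof -
  have U1: "U \<in> borel_measurable lamP1" using U_measurable by (simp add: measurable_cong_sets[OF sets_lamP1 refl])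
  have "(\<lambda>z. cos (of_int M * (of_int p * U (fst z) - of_int q * U (snd z)))) \<in> borel_measurable (lamP1 \<Otimes>\<^sub>M lamP1)"
    using U1 by measurable
  then show ?thesis unfolding phi_def lamP_def by (simp add: case_prod_beta')
qed

lemma phi_L2: "phi M p q \<in> L2P"
proof -
  have fin: "finite_measure lamP" unfolding lamP_def by (rule finite_measure_pair_measure[OF fin_lamP1 fin_lamP1])
  have "integrable lamP (\<lambda>z. (phi M p q z)\<^sup>2)"
  proof (rule finite_measure.integrable_const_bound[OF fin, where B=1])
    show "AE x in lamP. norm ((phi M p q x)\<^sup>2) \<le> 1"
      by (auto simp: phi_def abs_square_le_1 split: prod.splits)
    show "(\<lambda>z. (phi M p q z)\<^sup>2) \<in> borel_measurable lamP" using phi_measurable by measurable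
  qed
  then show ?thesis using phi_measurable by (simp add: L2P_def)
qed

lemma bad_sets: "{x. x = None \<or> sin (U x + a) = 0} \<in> sets P1space"
proof (rule sets_P1space_I)
  have f: "(\<lambda>t. sin (pi/2 - arctan t + a)) \<in> borel_measurable borel" by measurable
  have "Some -` {x. x = None \<or> sin (U x + a) = 0} = (\<lambda>t. sin (pi/2 - arctan t + a)) -` {0} \<inter> space borel"
    by (auto simp: U_def)
  also have "\<dots> \<in> sets borel" using measurable_sets[OF f, of "{0}"] by simp
  finally show "Some -` {x. x = None \<or> sin (U x + a) = 0} \<in> sets borel" .
qed

lemma bad_null: "{x. x = None \<or> sin (U x + a) = 0} \<in> null_sets lamP1"
proof -
  let ?E = "{x. x = None \<or> sin (U x + a) = 0}"
  let ?C = "insert 0 (range (\<lambda>i::int. 2 * (of_int i * pi - a)))"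
  have Cn: "?C \<in> null_sets lborel" by (rule countable_imp_null_set_lborel) auto
  have sub: "angpt -` ?E \<inter> {0..<2*pi} \<subseteq> ?C"
  proof
    fix r assume r: "r \<in> angpt -` ?E \<inter> {0..<2*pi}"
    show "r \<in> ?C"
    proof (cases "r = 0")
      case False
      then have r0: "0 < r" "r < 2 * pi" using r by auto
      have "sin (U (angpt r) + a) = 0" using r angpt_in[OF r0] by auto
      then have "sin (r / 2 + a) = 0" using angpt_in(2)[OF r0] by simp
      then obtain i :: int where "r / 2 + a = of_int i * pi" by (auto simp: sin_zero_iff_int2)
      then have "r = 2 * (of_int i * pi - a)" by simp
      then show ?thesis by blast
    qed simp
  qed
  have ms: "angpt -` ?E \<inter> {0..<2*pi} \<in> sets lborel"
  proof -
    have "angpt -` ?E \<inter> space lborel \<in> sets lborel" using measurable_sets[OF angpt_measurable bad_sets] .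
    then show ?thesis by auto
  qed
  have "angpt -` ?E \<inter> {0..<2*pi} \<in> null_sets lborel" by (rule null_sets_subset[OF Cn ms sub])
  then have "emeasure lamP1 ?E = 0" using emeasure_lamP1[OF bad_sets] by auto
  then show ?thesis using bad_sets by (simp add: null_sets_def sets_lamP1)
qed

lemma box_sets: "{x. x \<noteq> None \<and> u1 < U x \<and> U x < u2} \<in> sets P1space"
proof (rule sets_P1space_I)
  have f: "(\<lambda>t. pi/2 - arctan t) \<in> borel_measurable borel" by measurable
  have "Some -` {x. x \<noteq> None \<and> u1 < U x \<and> U x < u2} = (\<lambda>t. pi/2 - arctan t) -` {u1<..<u2} \<inter> space borel"
    by (auto simp: U_def)
  also have "\<dots> \<in> sets borel" using measurable_sets[OF f, of "{u1<..<u2}"] by simp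
  finally show "Some -` {x. x \<noteq> None \<and> u1 < U x \<and> U x < u2} \<in> sets borel" .
qed

lemma box_pos:
  assumes "0 \<le> u1" "u1 < u2" "u2 \<le> pi"
  shows "0 < emeasure lamP1 {x. x \<noteq> None \<and> u1 < U x \<and> U x < u2}"
proof -
  let ?X = "{x. x \<noteq> None \<and> u1 < U x \<and> U x < u2}"
  have sub: "{2*u1<..<2*u2} \<subseteq> angpt -` ?X \<inter> {0..<2*pi}"
  proof
    fix r assume r: "r \<in> {2*u1<..<2*u2}"
    then have r0: "0 < r" "r < 2 * pi" using assms by auto
    show "r \<in> angpt -` ?X \<inter> {0..<2*pi}" using r r0 angpt_in[OF r0] by auto
  qed
  have "0 < emeasure lborel {2*u1<..<2*u2}" using assms by simp
  also have "\<dots> \<le> emeasure lborel (angpt -` ?X \<inter> {0..<2*pi})"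
  proof (rule emeasure_mono[OF sub])
    have "angpt -` ?X \<inter> space lborel \<in> sets lborel" using measurable_sets[OF angpt_measurable box_sets] .
    then show "angpt -` ?X \<inter> {0..<2*pi} \<in> sets lborel" by auto
  qed
  also have "\<dots> = emeasure lamP1 ?X" using emeasure_lamP1[OF box_sets] by simp
  finally show ?thesis .
qed

lemma ae_good:
  assumes oddp: "odd (M * p)" and oddq: "odd (M * q)"
    and c: "of_int M * (of_int p * a - of_int q * b) = 2 * pi * of_int n"
  shows "AE z in lamP. Tdual (rotM a, rotM b) (phi M p q) z = phi M p q z"
proof -
  interpret L: finite_measure lamP1 by (rule fin_lamP1)
  let ?Ea = "{x. x = None \<or> sin (U x + a) = 0}"
  let ?Eb = "{x. x = None \<or> sin (U x + b) = 0}"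
  have n1: "?Ea \<times> UNIV \<in> null_sets lamP" unfolding lamP_def
    by (rule L.times_in_null_sets1[OF bad_null]) (metis sets.top space_lamP1)
  have n2: "UNIV \<times> ?Eb \<in> null_sets lamP" unfolding lamP_def
    by (rule L.times_in_null_sets2[OF _ bad_null]) (metis sets.top space_lamP1)
  have nn: "?Ea \<times> UNIV \<union> UNIV \<times> ?Eb \<in> null_sets lamP" using n1 n2 by (rule null_sets.Un)
  have pt: "Tdual (rotM a, rotM b) (phi M p q) (x, y) = phi M p q (x, y)"
    if hx: "x \<notin> ?Ea" and hy: "y \<notin> ?Eb" for x y
  proof -
    obtain t where t: "x = Some t" "sin (U (Some t) + a) \<noteq> 0" using hx by (cases x) auto
    obtain s' where s': "y = Some s'" "sin (U (Some s') + b) \<noteq> 0" using hy by (cases y) auto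
    have "Tdual (rotM a, rotM b) (phi M p q) (x, y)
        = cos (of_int M * (of_int p * (U (Some t) + a) - of_int q * (U (Some s') + b)))"
      unfolding t s' by (rule Tdual_phi[OF oddp oddq t(2) s'(2)])
    also have "of_int M * (of_int p * (U (Some t) + a) - of_int q * (U (Some s') + b))
        = of_int M * (of_int p * U (Some t) - of_int q * U (Some s')) + (2 * pi) * of_int n"
      using c by (simp add: algebra_simps)
    also have "cos \<dots> = phi M p q (x, y)" unfolding t s' phi_def by (simp add: cos_add)
    finally show ?thesis .
  qed
  show ?thesis
    by (rule AE_I'[OF nn]) (use pt in fastforce)
qed

lemma sin_two_zeros:
  fixes k :: int
  assumes k: "odd k" and z1: "sin (of_int k * u1 + d) = 0" and z2: "sin (of_int k * u2 + d) = 0"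
    and m: "m \<in> {1, 2, -1, -2}" and diff: "u1 - u2 = of_int m * pi / 4"
  shows False
proof -
  obtain i1 :: int where i1: "of_int k * u1 + d = of_int i1 * pi" using z1 by (auto simp: sin_zero_iff_int2)
  obtain i2 :: int where i2: "of_int k * u2 + d = of_int i2 * pi" using z2 by (auto simp: sin_zero_iff_int2)
  have "of_int k * (u1 - u2) = of_int (i1 - i2) * pi" using i1 i2 by (simp add: algebra_simps)
  then have "of_int k * (of_int m * pi / 4) = of_int (i1 - i2) * pi" using diff by simp
  then have "of_int (k * m) * pi = of_int (4 * (i1 - i2)) * pi" by (simp add: field_simps)
  then have "k * m = 4 * (i1 - i2)" using pi_gt_zero by (metis of_int_eq_iff mult_right_cancel less_irrefl)
  then show False using k m by auto presburger+
qed

lemma ae_bad: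
  assumes oddp: "odd (M * p)" and oddq: "odd (M * q)"
    and cC: "sin (of_int M * (of_int p * a - of_int q * b) / 2) \<noteq> 0"
  shows "\<not> (AE z in lamP. Tdual (rotM a, rotM b) (phi M p q) z = phi M p q z)"
proof
  assume AE: "AE z in lamP. Tdual (rotM a, rotM b) (phi M p q) z = phi M p q z"
  interpret L: finite_measure lamP1 by (rule fin_lamP1)
  define C where "C = of_int M * (of_int p * a - of_int q * b)"
  have one: "odd (1::int)" by simp
  obtain v0 where v0: "v0 = pi/4 \<or> v0 = 3*pi/4" "sin (v0 + b) \<noteq> 0"
  proof -
    have "\<not> (sin (pi/4 + b) = 0 \<and> sin (3*pi/4 + b) = 0)"
      using sin_two_zeros[OF one, of "pi/4" b "3*pi/4" "-2"] by auto
    then show ?thesis using that[of "pi/4"] that[of "3*pi/4"] by blast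
  qed
  define d where "d = C / 2 - of_int (M * q) * v0"
  obtain u0 where u0: "u0 = pi/4 \<or> u0 = pi/2 \<or> u0 = 3*pi/4" "sin (u0 + a) \<noteq> 0"
      "sin (of_int (M * p) * u0 + d) \<noteq> 0"
  proof -
    have a1: "\<not> (sin (of_int 1 * x + a) = 0 \<and> sin (of_int 1 * y + a) = 0)"
      if "x - y = of_int m * pi / 4" "m \<in> {1, 2, -1, -2}" for x y m
      using sin_two_zeros[OF one, of x a y m] that by auto
    have a2: "\<not> (sin (of_int (M * p) * x + d) = 0 \<and> sin (of_int (M * p) * y + d) = 0)"
      if "x - y = of_int m * pi / 4" "m \<in> {1, 2, -1, -2}" for x y m
      using sin_two_zeros[OF oddp, of x d y m] that by auto
    have b1: "\<not> (sin (pi/4 + a) = 0 \<and> sin (pi/2 + a) = 0)" using a1[of "pi/4" "pi/2" "-1"] by auto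
    have b2: "\<not> (sin (pi/4 + a) = 0 \<and> sin (3*pi/4 + a) = 0)" using a1[of "pi/4" "3*pi/4" "-2"] by auto
    have b3: "\<not> (sin (pi/2 + a) = 0 \<and> sin (3*pi/4 + a) = 0)" using a1[of "pi/2" "3*pi/4" "-1"] by auto
    have c1: "\<not> (sin (of_int (M * p) * (pi/4) + d) = 0 \<and> sin (of_int (M * p) * (pi/2) + d) = 0)"
      using a2[of "pi/4" "pi/2" "-1"] by auto
    have c2: "\<not> (sin (of_int (M * p) * (pi/4) + d) = 0 \<and> sin (of_int (M * p) * (3*pi/4) + d) = 0)"
      using a2[of "pi/4" "3*pi/4" "-2"] by auto
    have c3: "\<not> (sin (of_int (M * p) * (pi/2) + d) = 0 \<and> sin (of_int (M * p) * (3*pi/4) + d) = 0)"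
      using a2[of "pi/2" "3*pi/4" "-1"] by auto
    show ?thesis using that b1 b2 b3 c1 c2 c3 by blast
  qed
  define F where "F = (\<lambda>z::real \<times> real. sin (fst z + a) * sin (snd z + b) *
      sin (of_int M * (of_int p * fst z - of_int q * snd z) + C / 2))"
  have F0: "F (u0, v0) \<noteq> 0"
  proof -
    have "of_int M * (of_int p * u0 - of_int q * v0) + C / 2 = of_int (M * p) * u0 + d"
      unfolding d_def by (simp add: algebra_simps)
    then show ?thesis using u0 v0 by (simp add: F_def)
  qed
  have "open {z. F z \<noteq> 0}"
    by (rule open_Collect_neq) (auto simp: F_def intro!: continuous_intros)
  then obtain e where e: "e > 0" "ball (u0, v0) e \<subseteq> {z. F z \<noteq> 0}"
    using F0 by (metis mem_Collect_eq openE)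
  define \<delta> where "\<delta> = min (e / 2) (pi / 4)"
  have \<delta>: "\<delta> > 0" "\<delta> \<le> e / 2" "\<delta> \<le> pi / 4" using e by (auto simp: \<delta>_def)
  have Fbox: "F (u, v) \<noteq> 0" if "\<bar>u - u0\<bar> < \<delta>" "\<bar>v - v0\<bar> < \<delta>" for u v
  proof -
    have "dist (u, v) (u0, v0) < e"
      unfolding dist_Pair_Pair using that \<delta>
      by (intro sqrt_sum_squares_half_less) (auto simp: dist_real_def)
    then have "(u, v) \<in> ball (u0, v0) e" by (simp add: dist_commute)
    then show ?thesis using e(2) by blast
  qed
  define X where "X = {x. x \<noteq> None \<and> u0 - \<delta> < U x \<and> U x < u0 + \<delta>}"
  define Y where "Y = {x. x \<noteq> None \<and> v0 - \<delta> < U x \<and> U x < v0 + \<delta>}"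
  have XS: "X \<in> sets lamP1" "Y \<in> sets lamP1" unfolding X_def Y_def sets_lamP1 by (rule box_sets)+
  have Xp: "0 < emeasure lamP1 X" unfolding X_def using u0(1) \<delta> by (intro box_pos) auto
  have Yp: "0 < emeasure lamP1 Y" unfolding Y_def using v0(1) \<delta> by (intro box_pos) auto
  have "emeasure lamP (X \<times> Y) = emeasure lamP1 X * emeasure lamP1 Y"
    unfolding lamP_def by (rule L.emeasure_pair_measure_Times[OF XS])
  then have Rp: "0 < emeasure lamP (X \<times> Y)" using Xp Yp by (simp add: ennreal_zero_less_mult_iff)
  have ne: "Tdual (rotM a, rotM b) (phi M p q) z \<noteq> phi M p q z" if hz: "z \<in> X \<times> Y" for z
  proof -
    obtain t s' where z: "z = (Some t, Some s')" and ut: "\<bar>U (Some t) - u0\<bar> < \<delta>"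
        and vs: "\<bar>U (Some s') - v0\<bar> < \<delta>"
      using hz unfolding X_def Y_def by (cases z) (auto simp: abs_less_iff)
    define u where "u = U (Some t)"
    define v where "v = U (Some s')"
    have Fu: "F (u, v) \<noteq> 0" using Fbox ut vs unfolding u_def v_def by blast
    then have s1: "sin (u + a) \<noteq> 0" and s2: "sin (v + b) \<noteq> 0"
      and s3: "sin (of_int M * (of_int p * u - of_int q * v) + C / 2) \<noteq> 0"
      by (auto simp: F_def)
    define W where "W = of_int M * (of_int p * u - of_int q * v)"
    have "Tdual (rotM a, rotM b) (phi M p q) z = cos (of_int M * (of_int p * (u + a) - of_int q * (v + b)))"
      unfolding z u_def v_def by (rule Tdual_phi[OF oddp oddq]) (use s1 s2 in \<open>simp_all add: u_def v_def\<close>)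
    also have "of_int M * (of_int p * (u + a) - of_int q * (v + b)) = W + C"
      unfolding W_def C_def by (simp add: algebra_simps)
    finally have T: "Tdual (rotM a, rotM b) (phi M p q) z = cos (W + C)" .
    have P: "phi M p q z = cos W" unfolding z phi_def W_def u_def v_def by simp
    have "cos (W + C) - cos W = 2 * sin ((W + C + W) / 2) * sin ((W - (W + C)) / 2)"
      by (rule cos_diff_cos)
    also have "\<dots> = - 2 * sin (W + C / 2) * sin (C / 2)"
      by (simp add: field_simps)
    finally have "cos (W + C) - cos W \<noteq> 0" using s3 cC unfolding W_def C_def by simp
    then show ?thesis using T P by simp
  qed
  from AE obtain N where N: "{z \<in> space lamP. \<not> Tdual (rotM a, rotM b) (phi M p q) z = phi M p q z} \<subseteq> N"
      "emeasure lamP N = 0" "N \<in> sets lamP"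
    by (rule AE_E)
  have "X \<times> Y \<subseteq> N" using N(1) ne by auto
  then have "emeasure lamP (X \<times> Y) \<le> emeasure lamP N" by (rule emeasure_mono[OF _ N(3)])
  then show False using Rp N(2) by simp
qed

lemma rotM_period: "rotM (x + 2 * pi * of_int k) = rotM x"
proof -
  have "sin (x + 2 * pi * of_int k) = sin x \<and> cos (x + 2 * pi * of_int k) = cos x"
    using sin_cos_eq_iff by blast
  then show ?thesis by (simp add: rotM_def)
qed

theorem mainTheorem7:
  fixes N :: nat and q p :: int
  assumes "N \<ge> 1" and "odd N"
    and "odd q" and "odd p" and "coprime q p"
  shows "\<exists>\<phi> \<in> L2P. stabSO \<phi> = Hgrp N q p"
proof -
  define g where "g = gcd (int N) q"
  define M where "M = int N div g"
  define q' where "q' = q div g"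
  have g0: "g > 0" using assms(1) by (simp add: g_def)
  have NM: "int N = M * g" unfolding M_def g_def by simp
  have qq: "q = q' * g" unfolding q'_def g_def by simp
  have oddM: "odd M"
  proof
    assume "even M"
    then have "even (int N)" unfolding NM by simp
    then show False using assms(2) by simp
  qed
  have oddMp: "odd (M * p)" and oddMq: "odd (M * q)" using oddM assms(3,4) by auto
  have cop1: "coprime M q'" unfolding M_def q'_def g_def
    by (rule div_gcd_coprime) (use assms(1) in auto)
  have cop2: "coprime p q'" using assms(5) qq by (metis coprime_commute coprime_mult_right_iff)
  have cop: "coprime (M * p) q'" using cop1 cop2 by simp
  obtain x y where xy: "x * (M * p) + y * q' = 1"
    using bezout_int[of "M * p" q'] cop by (auto simp: coprime_iff_gcd_eq_1)
  have q0: "q \<noteq> 0" using assms(3) by auto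
  have N0: "real N > 0" using assms(1) by simp
  have M0: "M \<noteq> 0" using oddM by auto
  have Mqr: "real_of_int M * real_of_int q = real N * real_of_int q'"
  proof -
    have "M * q = int N * q'" using NM qq by (simp add: algebra_simps)
    then have "real_of_int (M * q) = real_of_int (int N * q')" by simp
    then show ?thesis by simp
  qed
  have "stabSO (phi M p q) = Hgrp N q p"
  proof
    show "stabSO (phi M p q) \<subseteq> Hgrp N q p"
    proof
      fix k assume k: "k \<in> stabSO (phi M p q)"
      then obtain a b where kab: "k = (rotM a, rotM b)" by (auto simp: stabSO_def SO2_def)
      have AE: "AE z in lamP. Tdual (rotM a, rotM b) (phi M p q) z = phi M p q z"
        using k kab by (simp add: stabSO_def)
      define C where "C = of_int M * (of_int p * a - of_int q * b)"
      have "sin (C / 2) = 0" using ae_bad[OF oddMp oddMq] AE unfolding C_def by blast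
      then obtain n :: int where n: "C / 2 = of_int n * pi" by (auto simp: sin_zero_iff_int2)
      define j where "j = n * x"
      define ii where "ii = - n * y"
      have jii: "M * p * j - q' * ii = n" unfolding j_def ii_def using xy
        by (metis (no_types, lifting) mult.commute mult.left_commute mult_minus_left diff_minus_eq_add
            distrib_left mult.right_neutral)
      define i where "i = nat (ii mod int N)"
      define w where "w = ii div int N"
      have iN: "i < N" unfolding i_def using assms(1) by (simp add: nat_less_iff)
      have iiw: "ii = int N * w + int i" unfolding i_def w_def using assms(1) by simp
      define \<theta> where "\<theta> = (a - 2 * pi * of_int j) / of_int q"
      have e1: "of_int q * \<theta> = a - 2 * pi * of_int j" unfolding \<theta>_def using q0 by simp
      have e2: "b = of_int p * \<theta> + 2 * pi * real i / real N + 2 * pi * of_int w"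
      proof -
        let ?R = "of_int p * \<theta> + 2 * pi * real i / real N + 2 * pi * of_int w"
        have r1: "real_of_int M * real_of_int q * (of_int p * \<theta>) = of_int M * of_int p * a - 2 * pi * of_int (M * p * j)"
        proof -
          have "real_of_int M * real_of_int q * (of_int p * \<theta>) = of_int M * of_int p * (of_int q * \<theta>)"
            by (simp add: algebra_simps)
          also have "\<dots> = of_int M * of_int p * a - 2 * pi * of_int (M * p * j)"
            unfolding e1 by (simp add: algebra_simps)
          finally show ?thesis .
        qed
        have r2: "real_of_int M * real_of_int q * (2 * pi * real i / real N + 2 * pi * of_int w)
            = 2 * pi * of_int (q' * ii)"
          unfolding Mqr iiw using N0 by (simp add: field_simps)
        have "real_of_int M * real_of_int q * ?R = of_int M * of_int p * a - 2 * pi * of_int (M * p * j - q' * ii)"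
          using r1 r2 by (simp add: algebra_simps)
        also have "\<dots> = real_of_int M * real_of_int q * b"
          unfolding jii using n unfolding C_def by (simp add: algebra_simps)
        finally show ?thesis using M0 q0 by simp
      qed
      have "rotM a = rotM (of_int q * \<theta>)"
        unfolding e1 using rotM_period[of "a - 2 * pi * of_int j" j] by simp
      moreover have "rotM b = rotM (of_int p * \<theta> + 2 * pi * real i / real N)"
        unfolding e2 by (rule rotM_period)
      ultimately show "k \<in> Hgrp N q p" unfolding kab Hgrp_def using iN by auto
    qed
    show "Hgrp N q p \<subseteq> stabSO (phi M p q)"
    proof
      fix k assume "k \<in> Hgrp N q p"
      then obtain \<theta> i where k: "k = (rotM (of_int q * \<theta>), rotM (of_int p * \<theta> + 2 * pi * real i / real N))"
        by (auto simp: Hgrp_def)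
      have "of_int M * (of_int p * (of_int q * \<theta>) - of_int q * (of_int p * \<theta> + 2 * pi * real i / real N))
          = - (real_of_int M * real_of_int q) * (2 * pi * real i / real N)"
        by (simp add: algebra_simps)
      also have "\<dots> = 2 * pi * of_int (- (q' * int i))" unfolding Mqr using N0 by simp
      finally have c: "of_int M * (of_int p * (of_int q * \<theta>) - of_int q * (of_int p * \<theta> + 2 * pi * real i / real N))
          = 2 * pi * of_int (- (q' * int i))" .
      have "AE z in lamP. Tdual k (phi M p q) z = phi M p q z"
        unfolding k by (rule ae_good[OF oddMp oddMq c])
      moreover have "k \<in> SO2 \<times> SO2" unfolding k SO2_def by auto
      ultimately show "k \<in> stabSO (phi M p q)" by (simp add: stabSO_def)
    qed
  qed
  then show ?thesis using phi_L2 by blast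
qed

end
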